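(* Consider a one-step MDP ($T=1$) with a single state $\mathcal{S}=\{s_0\}$, action space equal to the goal space $\mathcal{A}=\mathcal{G}$ with $|\mathcal{A}|=|\mathcal{G}|=k$, and reward $r(s,a,g)=\mathbb{I}[a=g]$. Let the policy be $\pi(a\mid s_0,g)=\exp(L_{a,g})/\sum_{b\in\mathcal{A}}\exp(L_{b,g})$ with logits $L_{a,g}$, let the goal distribution be uniform, $p(g)=1/k$ for all $g\in\mathcal{G}$, and suppose the policy is at its initialization $L_{a,g}\equiv L$ for all $a,g$ (some constant $L$). For $a\in\mathcal{A},g\in\mathcal{G}$, let $\eta_{a,g}=r(s_0,b,g')\,\frac{\partial}{\partial L_{a,g}}\log\pi(b\mid s_0,g')$, where $g'\sim p(\cdot)$ and $b\sim\pi(\cdot\mid s_0,g')$, be the one-sample REINFORCE estimator of $\frac{\partial}{\partial L_{a,g}}J$, with $J=\mathbb{E}_{g\sim p}\mathbb{E}_{a\sim\pi(\cdot\mid s_0,g)}[r(s_0,a,g)]$. For a random variable $x$ define $\mathrm{MSE}[x]:=\mathbb{E}[(x-\mathbb{E}[\eta_{a,g}])^2]$. Then for every $a\in\mathcal{A}$ and $g\in\mathcal{G}$, as $k\to\infty$, $$\frac{\sqrt{\mathrm{MSE}[\eta_{a,g}]}}{\big|\mathbb{E}[\eta_{a,g}]\big|}=k\,(1+o(1)).$$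
   Context: $o(1)$ denotes a quantity tending to $0$ as $k\to\infty$. *)

theory Defs
  imports "HOL-Analysis.Analysis"
begin

text \<open>One-step MDP with a single state s0 (suppressed), actions = goals = {0..<k}.
  Logits are a function Lg :: nat => nat => real, Lg b g = logit of action b for goal g.\<close>

definition reward :: "nat \<Rightarrow> nat \<Rightarrow> real" where
  "reward b g = (if b = g then 1 else 0)"

definition policy :: "nat \<Rightarrow> (nat \<Rightarrow> nat \<Rightarrow> real) \<Rightarrow> nat \<Rightarrow> nat \<Rightarrow> real" where
  "policy k Lg b g = exp (Lg b g) / (\<Sum>c<k. exp (Lg c g))"

definition upd_logit :: "(nat \<Rightarrow> nat \<Rightarrow> real) \<Rightarrow> nat \<Rightarrow> nat \<Rightarrow> real \<Rightarrow> nat \<Rightarrow> nat \<Rightarrow> real" where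
  "upd_logit Lg a g t = (\<lambda>a' g'. if a' = a \<and> g' = g then t else Lg a' g')"

definition dlogpi :: "nat \<Rightarrow> (nat \<Rightarrow> nat \<Rightarrow> real) \<Rightarrow> nat \<Rightarrow> nat \<Rightarrow> nat \<Rightarrow> nat \<Rightarrow> real" where
  "dlogpi k Lg a g b g' = deriv (\<lambda>t. ln (policy k (upd_logit Lg a g t) b g')) (Lg a g)"

definition eta :: "nat \<Rightarrow> (nat \<Rightarrow> nat \<Rightarrow> real) \<Rightarrow> nat \<Rightarrow> nat \<Rightarrow> nat \<Rightarrow> nat \<Rightarrow> real" where
  "eta k Lg a g g' b = reward b g' * dlogpi k Lg a g b g'"

definition expect :: "nat \<Rightarrow> (nat \<Rightarrow> nat \<Rightarrow> real) \<Rightarrow> (nat \<Rightarrow> nat \<Rightarrow> real) \<Rightarrow> real" where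
  "expect k Lg X = (\<Sum>g'<k. \<Sum>b<k. (1 / real k) * policy k Lg b g' * X g' b)"

definition mean_eta :: "nat \<Rightarrow> (nat \<Rightarrow> nat \<Rightarrow> real) \<Rightarrow> nat \<Rightarrow> nat \<Rightarrow> real" where
  "mean_eta k Lg a g = expect k Lg (eta k Lg a g)"

definition mse_eta :: "nat \<Rightarrow> (nat \<Rightarrow> nat \<Rightarrow> real) \<Rightarrow> nat \<Rightarrow> nat \<Rightarrow> real" where
  "mse_eta k Lg a g = expect k Lg (\<lambda>g' b. (eta k Lg a g g' b - mean_eta k Lg a g)^2)"

end

theory Submission
  imports Defs "HOL-Real_Asymp.Real_Asymp"
begin

lemma sum_upd:
  assumes "a < k"
  shows "(\<Sum>c<k. exp (if c = a then t else L)) = exp t + (real k - 1) * exp L"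
proof -
  have "(\<Sum>c<k. exp (if c = a then t else L)) = exp t + (\<Sum>c\<in>{..<k}-{a}. exp (if c = a then t else L))"
    using assms by (subst sum.remove[of _ a]) auto
  also have "(\<Sum>c\<in>{..<k}-{a}. exp (if c = a then t else L)) = (\<Sum>c\<in>{..<k}-{a}. exp L)"
    by (rule sum.cong) auto
  also have "\<dots> = (real k - 1) * exp L" using assms by (simp add: of_nat_diff)
  finally show ?thesis .
qed

lemma dlogpi_const:
  assumes "a < k" "g < k"
  shows "dlogpi k (\<lambda>_ _. L) a g b g' = (if g' = g then (if b = a then 1 else 0) - 1 / real k else 0)"
proof (cases "g' = g")
  case False
  then have "(\<lambda>t. ln (policy k (upd_logit (\<lambda>_ _. L) a g t) b g')) = (\<lambda>t. ln (policy k (\<lambda>_ _. L) b g'))"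
    by (simp add: upd_logit_def policy_def)
  then show ?thesis using False by (simp add: dlogpi_def)
next
  case True
  have k1: "real k \<ge> 1" using assms by simp
  have pos: "exp t + (real k - 1) * exp L > 0" for t
    using k1 by (simp add: add_pos_nonneg)
  have eq: "(\<lambda>t. ln (policy k (upd_logit (\<lambda>_ _. L) a g t) b g')) =
        (\<lambda>t. (if b = a then t else L) - ln (exp t + (real k - 1) * exp L))"
  proof
    fix t
    have "policy k (upd_logit (\<lambda>_ _. L) a g t) b g' = exp (if b = a then t else L) / (exp t + (real k - 1) * exp L)"
      using True assms by (simp add: upd_logit_def policy_def sum_upd[symmetric])
    then show "ln (policy k (upd_logit (\<lambda>_ _. L) a g t) b g') = (if b = a then t else L) - ln (exp t + (real k - 1) * exp L)"
      using pos[of t] by (simp add: ln_div)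
  qed
  have d: "((\<lambda>t. (if b = a then t else L) - ln (exp t + (real k - 1) * exp L)) has_real_derivative
        ((if b = a then 1 else 0) - exp L / (exp L + (real k - 1) * exp L))) (at L)"
  proof (cases "b = a")
    case True
    show ?thesis unfolding True
      by (auto intro!: derivative_eq_intros pos)
  next
    case False
    show ?thesis using False
      by (auto intro!: derivative_eq_intros pos)
  qed
  have "exp L / (exp L + (real k - 1) * exp L) = 1 / real k"
    by (simp add: field_simps)
  then show ?thesis using True d eq
    by (simp add: dlogpi_def DERIV_imp_deriv)
qed


lemma eta_const:
  assumes "a < k" "g < k"
  shows "eta k (\<lambda>_ _. L) a g g' b = (if g' = g \<and> b = g then (if g = a then 1 else 0) - 1 / real k else 0)"
  using dlogpi_const[OF assms] by (auto simp: eta_def reward_def)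

lemma policy_const: "k \<ge> 1 \<Longrightarrow> policy k (\<lambda>_ _. L) b g' = 1 / real k"
  by (simp add: policy_def)

lemma expect_const:
  assumes "k \<ge> 1"
  shows "expect k (\<lambda>_ _. L) X = (\<Sum>g'<k. \<Sum>b<k. X g' b) / (real k)^2"
  using assms by (simp add: expect_def policy_const sum_divide_distrib power2_eq_square)

lemma sum_single:
  fixes g k :: nat
  assumes "g < k"
  shows "(\<Sum>g'<k. \<Sum>b<k. (if g' = g \<and> b = g then (c::real) else 0)) = c"
proof -
  have inner: "(\<Sum>b<k. (if b = g then c else 0)) = c"
    using assms by (subst sum.delta) simp_all
  have "(\<Sum>g'<k. \<Sum>b<k. (if g' = g \<and> b = g then c else 0)) = (\<Sum>g'<k. if g' = g then c else 0)"
    using assms inner by (intro sum.cong) auto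
  also have "\<dots> = c" using assms by simp
  finally show ?thesis .
qed

lemma ratio_eq:
  assumes "a < k" "g < k" "k \<ge> 2"
  shows "sqrt (mse_eta k (\<lambda>_ _. L) a g) / \<bar>mean_eta k (\<lambda>_ _. L) a g\<bar> = sqrt ((real k)^2 - 1)"
proof -
  define c where "c = (if g = a then 1 else 0) - 1 / real k"
  have k: "real k \<ge> 2" using assms by simp
  have c0: "c \<noteq> 0" using k by (auto simp: c_def field_simps)
  have et: "eta k (\<lambda>_ _. L) a g = (\<lambda>g' b. if g' = g \<and> b = g then c else 0)"
    using eta_const[OF assms(1,2)] by (intro ext) (simp add: c_def)
  have m: "mean_eta k (\<lambda>_ _. L) a g = c / (real k)^2"
    unfolding mean_eta_def expect_const[OF order_trans[OF _ assms(3)], OF one_le_numeral] et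
    using sum_single[OF assms(2)] by simp
  define m where "m = c / (real k)^2"
  have sq: "(\<lambda>g' b. ((if g' = g \<and> b = g then c else 0) - m)^2) = (\<lambda>g' b. m^2 + (if g' = g \<and> b = g then (c - m)^2 - m^2 else 0))"
    by (intro ext) simp
  have "mse_eta k (\<lambda>_ _. L) a g = (\<Sum>g'<k. \<Sum>b<k. m^2 + (if g' = g \<and> b = g then (c - m)^2 - m^2 else 0)) / (real k)^2"
    unfolding mse_eta_def expect_const[OF order_trans[OF _ assms(3)], OF one_le_numeral] et m m_def[symmetric] sq ..
  also have "\<dots> = ((real k)^2 * m^2 + ((c - m)^2 - m^2)) / (real k)^2"
    using sum_single[OF assms(2), of "(c - m)^2 - m^2"] by (simp add: sum.distrib power2_eq_square)
  also have "\<dots> = c^2 * ((real k)^2 - 1) / ((real k)^2)^2"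
    using k unfolding m_def by (simp add: field_simps) algebra
  finally have e: "mse_eta k (\<lambda>_ _. L) a g = c^2 * ((real k)^2 - 1) / ((real k)^2)^2" .
  have "sqrt (c^2 * ((real k)^2 - 1) / ((real k)^2)^2) = \<bar>c\<bar> * sqrt ((real k)^2 - 1) / (real k)^2"
  proof -
    have s: "sqrt (((real k)^2)^2) = (real k)^2" by (rule real_sqrt_abs[THEN trans]) simp
    show ?thesis by (simp only: real_sqrt_mult real_sqrt_divide s real_sqrt_abs) simp
  qed
  moreover have "\<bar>c / (real k)^2\<bar> = \<bar>c\<bar> / (real k)^2" by simp
  ultimately show ?thesis unfolding e m using c0 k by simp
qed

theorem theorem1:
  fixes L :: real and a g :: "nat \<Rightarrow> nat"
  assumes "\<forall>k\<ge>1. a k < k \<and> g k < k"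
  shows "((\<lambda>k. (sqrt (mse_eta k (\<lambda>_ _. L) (a k) (g k))
                   / \<bar>mean_eta k (\<lambda>_ _. L) (a k) (g k)\<bar>) / real k) \<longlongrightarrow> 1) sequentially"
proof -
  have ev: "\<forall>\<^sub>F k in sequentially. sqrt ((real k)^2 - 1) / real k =
      (sqrt (mse_eta k (\<lambda>_ _. L) (a k) (g k)) / \<bar>mean_eta k (\<lambda>_ _. L) (a k) (g k)\<bar>) / real k"
    using eventually_ge_at_top[of 2]
    by eventually_elim (use assms ratio_eq in auto)
  have "((\<lambda>k. sqrt ((real k)^2 - 1) / real k) \<longlongrightarrow> 1) sequentially"
    by real_asymp
  from Lim_transform_eventually[OF this ev] show ?thesis .
qed

end
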